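(* Let $f\in\mathcal{F}_{1,1}$ and let $t,T$ be positive integers. There exists a function $\widetilde f:[0,1]\to\mathbb{R}$ such that: (i) $\widetilde f$ is continuous and Lipschitz with constant $1$; (ii) $\widetilde f(\frac iT)=\left\lceil Tf(\frac iT)/2^{-t}\right\rceil\frac{2^{-t}}{T}$ for $i=0,1,\dots,T$; (iii) $|\widetilde f(x)-f(x)|<\frac{2^{-t}}{T}$ for all $x\in[0,1]$.
   Context: $\mathcal{F}_{1,1}$ is the set of functions $f\in\mathscr{W}^{1,\infty}([0,1])$ (identified with their continuous representatives) with $\operatorname{ess\,sup}|f|\le1$ and $\operatorname{ess\,sup}|f'|\le1$. *)

theory Defs
  imports "HOL-Analysis.Analysis"
begin

text \<open>The class F_{1,1}: functions f in W^{1,infinity}([0,1]) (continuous representative)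
  with ess sup |f| <= 1 and ess sup |f'| <= 1.  A function on [0,1] lies in W^{1,infinity}
  with weak derivative g iff it is (a.e. equal to) an indefinite integral of an integrable
  g that is essentially bounded; we use the continuous representative f itself.
  For a continuous f, ess sup |f| <= 1 on [0,1] is the same as |f x| <= 1 for all x.\<close>

definition F11 :: "(real \<Rightarrow> real) \<Rightarrow> bool" where
  "F11 f \<longleftrightarrow>
     continuous_on {0..1} f \<and>
     (\<forall>x\<in>{0..1}. \<bar>f x\<bar> \<le> 1) \<and>
     (\<exists>g. g integrable_on {0..1} \<and>
          (AE x in lebesgue. x \<in> {0..1} \<longrightarrow> \<bar>g x\<bar> \<le> 1) \<and>
          (\<forall>x\<in>{0..1}. f x = f 0 + integral {0..x} g))"

end

theory Submission imports Defs begin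

lemma F11_lip:
  assumes "F11 f" "x \<in> {0..1}" "y \<in> {0..1}"
  shows "\<bar>f y - f x\<bar> \<le> \<bar>y - x\<bar>"
proof -
  obtain g where gi: "g integrable_on {0..1}"
    and ae: "AE x in lebesgue. x \<in> {0..1} \<longrightarrow> \<bar>g x\<bar> \<le> 1"
    and fe: "\<forall>x\<in>{0..1}. f x = f 0 + integral {0..x} g"
    using assms(1) unfolding F11_def by blast
  from ae obtain N where N: "{x \<in> space lebesgue. \<not> (x \<in> {0..1} \<longrightarrow> \<bar>g x\<bar> \<le> 1)} \<subseteq> N"
    "emeasure lebesgue N = 0" "N \<in> sets lebesgue" by (rule AE_E)
  have negN: "negligible N" using N by (simp add: negligible_iff_null_sets null_setsI)
  define g' where "g' x = (if \<bar>g x\<bar> \<le> 1 then g x else 0)" for x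
  have key: "\<bar>f b - f a\<bar> \<le> b - a" if ab: "0 \<le> a" "a \<le> b" "b \<le> 1" for a b
  proof -
    have gab: "g integrable_on {a..b}" using ab by (intro integrable_on_subinterval[OF gi]) simp
    have g0a: "g integrable_on {0..b}" using ab by (intro integrable_on_subinterval[OF gi]) simp
    have comb: "integral {0..a} g + integral {a..b} g = integral {0..b} g"
      using Henstock_Kurzweil_Integration.integral_combine[OF ab(1) ab(2) g0a] .
    have "f b = f 0 + integral {0..b} g" "f a = f 0 + integral {0..a} g"
      using bspec[OF fe, of b] bspec[OF fe, of a] ab by simp_all
    then have eq: "f b - f a = integral {a..b} g" using comb by linarith
    have sp: "g x = g' x" if "x \<in> {a..b} - N" for x
      proof -
      have "x \<notin> N" "x \<in> {0..1}" using that ab by auto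
      then have "\<bar>g x\<bar> \<le> 1" using N(1) by auto
      then show ?thesis by (simp add: g'_def)
    qed
    have "integral {a..b} g = integral {a..b} g'"
      by (rule integral_spike[OF negN]) (use sp in force)
    moreover have "g' integrable_on {a..b}"
      by (rule integrable_spike[OF gab negN]) (use sp in auto)
    then have "(g' has_integral integral {a..b} g') (cbox a b)" using integrable_integral cbox_interval by metis
    from has_integral_bound[OF zero_le_one this]
    have "norm (integral {a..b} g') \<le> b - a" using ab by (simp add: g'_def)
    ultimately show ?thesis using eq ab by simp
  qed
  show ?thesis
  proof (cases "x \<le> y")
    case True then show ?thesis using key[of x y] assms by auto
  next
    case False then show ?thesis using key[of y x] assms by auto
  qed
qed

theorem proposition4:
  fixes f :: "real \<Rightarrow> real" and t T :: nat
  assumes "F11 f" and "t > 0" and "T > 0"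
  shows "\<exists>ft :: real \<Rightarrow> real.
           continuous_on {0..1} ft \<and> 1-lipschitz_on {0..1} ft \<and>
           (\<forall>i\<in>{0..T}. ft (real i / real T) =
              real_of_int \<lceil>real T * f (real i / real T) / (2 powr - real t)\<rceil>
                * (2 powr - real t) / real T) \<and>
           (\<forall>x\<in>{0..1}. \<bar>ft x - f x\<bar> < (2 powr - real t) / real T)"
proof -
  define p :: real where "p = 2 powr - real t"
  define q :: real where "q = 2 ^ t"
  have pq: "p * q = 1" unfolding p_def q_def
    by (simp add: powr_minus powr_realpow divide_simps)
  have p0: "p > 0" unfolding p_def by simp
  have T0: "real T > 0" using assms(3) by simp
  define y where "y i = real_of_int \<lceil>real T * f (real i / real T) / p\<rceil> * p / real T" for i :: nat
  define h where "h x i = y i - \<bar>x - real i / real T\<bar>" for x :: real and i :: nat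
  define g where "g x = Max (h x ` {0..T})" for x
  define ft where "ft x = max (f x) (g x)" for x
  have grid: "real i / real T \<in> {0..1}" if "i \<le> T" for i
    using that T0 by (auto simp: divide_simps)
  have yA: "f (real i / real T) \<le> y i \<and> y i < f (real i / real T) + p / real T" for i
  proof -
    let ?a = "real T * f (real i / real T) / p"
    have c1: "?a \<le> real_of_int \<lceil>?a\<rceil>" "real_of_int \<lceil>?a\<rceil> < ?a + 1" by linarith+
    have "y i = real_of_int \<lceil>?a\<rceil> * p / real T" by (simp add: y_def)
    moreover have "?a * p / real T = f (real i / real T)" using p0 T0 by simp
    moreover have "(?a + 1) * p / real T = f (real i / real T) + p / real T"
      using p0 T0 by (simp add: divide_simps)
    moreover have "?a * p / real T \<le> real_of_int \<lceil>?a\<rceil> * p / real T"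
      using c1 p0 T0 by (intro divide_right_mono mult_right_mono) auto
    moreover have "real_of_int \<lceil>?a\<rceil> * p / real T < (?a + 1) * p / real T"
      using c1 p0 T0 by (intro divide_strict_right_mono mult_strict_right_mono) auto
    ultimately show ?thesis by simp
  qed
  have yB: "h (real j / real T) i \<le> y j" if "i \<le> T" "j \<le> T" for i j
  proof -
    let ?xi = "real i / real T" and ?xj = "real j / real T"
    define k :: int where "k = \<bar>int j - int i\<bar> * 2 ^ t"
    have dx: "\<bar>?xj - ?xi\<bar> = real_of_int \<bar>int j - int i\<bar> / real T"
      using T0 by (simp add: diff_divide_distrib[symmetric] abs_divide)
    have "f ?xi \<le> f ?xj + \<bar>?xj - ?xi\<bar>"
      using F11_lip[OF assms(1) grid[OF that(2)] grid[OF that(1)]] by linarith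
    then have "real T * f ?xi / p \<le> real T * (f ?xj + \<bar>?xj - ?xi\<bar>) / p"
      using T0 p0 by (intro divide_right_mono mult_left_mono) auto
    also have "\<dots> = real T * f ?xj / p + real_of_int k"
    proof -
      have "real T * \<bar>?xj - ?xi\<bar> / p = real_of_int \<bar>int j - int i\<bar> * q"
        using dx T0 p0 pq by (simp add: divide_simps) (metis mult.commute mult.left_commute)
      then show ?thesis by (simp add: k_def q_def add_divide_distrib distrib_left)
    qed
    finally have "\<lceil>real T * f ?xi / p\<rceil> \<le> \<lceil>real T * f ?xj / p + real_of_int k\<rceil>"
      by (rule ceiling_mono)
    then have ce: "\<lceil>real T * f ?xi / p\<rceil> \<le> \<lceil>real T * f ?xj / p\<rceil> + k" by simp
    have "y i \<le> real_of_int (\<lceil>real T * f ?xj / p\<rceil> + k) * p / real T"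
    proof -
      have "real_of_int \<lceil>real T * f ?xi / p\<rceil> \<le> real_of_int (\<lceil>real T * f ?xj / p\<rceil> + k)"
        using ce of_int_le_iff by blast
      then show ?thesis unfolding y_def using p0 T0
        by (intro divide_right_mono mult_right_mono) auto
    qed
    also have "\<dots> = y j + real_of_int k * p / real T"
      by (simp add: y_def distrib_right add_divide_distrib)
    also have "real_of_int k * p / real T = \<bar>?xj - ?xi\<bar>"
      using dx pq by (simp add: k_def q_def) (metis mult.assoc mult.commute mult.right_neutral)
    finally show ?thesis by (simp add: h_def abs_minus_commute)
  qed
  have fin: "finite (h x ` {0..T})" "h x ` {0..T} \<noteq> {}" for x by auto
  have gC: "g (real j / real T) = y j" if "j \<le> T" for j
  proof (rule antisym)
    show "g (real j / real T) \<le> y j" unfolding g_def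
      using yB that by (subst Max_le_iff[OF fin]) auto
    have "h (real j / real T) j = y j" by (simp add: h_def)
    then show "y j \<le> g (real j / real T)" unfolding g_def
      using that by (subst Max_ge_iff[OF fin]) force
  qed
  have gD: "g x < f x + p / real T" if "x \<in> {0..1}" for x
  proof -
    obtain i where i: "i \<in> {0..T}" "g x = h x i" unfolding g_def using Max_in[OF fin(1)[of x] fin(2)[of x]] by (auto simp del: Max_in)
    have "\<bar>f x - f (real i / real T)\<bar> \<le> \<bar>x - real i / real T\<bar>"
      using F11_lip[OF assms(1) grid that] i by auto
    then show ?thesis using i(2) yA[of i] unfolding h_def by linarith
  qed
  have gE: "g x \<le> g z + \<bar>x - z\<bar>" for x z
  proof -
    have "h x i \<le> g z + \<bar>x - z\<bar>" if "i \<in> {0..T}" for i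
    proof -
      have "h z i \<le> g z" unfolding g_def using that fin by (intro Max_ge) auto
      then show ?thesis unfolding h_def by linarith
    qed
    then show ?thesis unfolding g_def by (subst Max_le_iff[OF fin]) auto
  qed
  have lip: "1-lipschitz_on {0..1} ft"
  proof (rule lipschitz_onI)
    fix x z :: real assume "x \<in> {0..1}" "z \<in> {0..1}"
    then have "\<bar>f x - f z\<bar> \<le> \<bar>x - z\<bar>" using F11_lip[OF assms(1)] by (metis abs_minus_commute)
    moreover have "\<bar>g x - g z\<bar> \<le> \<bar>x - z\<bar>" using gE[of x z] gE[of z x] by (auto simp: abs_minus_commute)
    ultimately show "dist (ft x) (ft z) \<le> 1 * dist x z"
      unfolding ft_def dist_real_def by (auto simp: max_def abs_le_iff)
  qed simp
  show ?thesis
  proof (intro exI conjI ballI)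
    show "continuous_on {0..1} ft" using lip by (rule lipschitz_on_continuous_on)
    show "1-lipschitz_on {0..1} ft" by (rule lip)
  next
    fix i assume "i \<in> {0..T}"
    then have "ft (real i / real T) = y i" using gC yA[of i] by (simp add: ft_def)
    then show "ft (real i / real T) = real_of_int \<lceil>real T * f (real i / real T) / (2 powr - real t)\<rceil>
                * (2 powr - real t) / real T" by (simp add: y_def p_def)
  next
    fix x :: real assume x: "x \<in> {0..1}"
    have "p / real T > 0" using p0 T0 by simp
    then show "\<bar>ft x - f x\<bar> < 2 powr - real t / real T"
      using gD[OF x] unfolding ft_def p_def by (auto simp: max_def)
  qed
qed

end
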